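(* Let $\mathcal{I}=(\mathcal{P},\mathcal{L})$ be a cyclic symmetric $(v,k)$-configuration with cyclic permutation $\sigma$. Fix a point $P_0$ and a block $\ell_0$, and put $P_i=\sigma^i(P_0)$, $\ell_i=\sigma^i(\ell_0)$ (indices modulo $v$). Let $d$ be a positive divisor of $v$, $t=v/d$, $O_i=\{P_u:u\equiv i\pmod t\}$, $L_i=\{\ell_u:u\equiv i\pmod t\}$ for $i=0,\dots,t-1$, and $w_u=|\ell_0\cap O_u|$. Let $V$ be the $v\times v$ incidence matrix of $\mathcal{I}$ whose rows are ordered as $\ell_0,\ell_t,\dots,\ell_{(d-1)t},\ell_1,\ell_{1+t},\dots,\ell_{t-1+(d-1)t}$ (i.e. $L_0$, then $L_1$, etc., each listed as $\ell_i,\ell_{i+t},\dots,\ell_{i+(d-1)t}$) and whose columns are ordered analogously as $P_0,P_t,\dots$ ($O_0$, then $O_1$, etc.). Then $V$ (which contains no $2\times2$ all-ones submatrix) is $d$-block circulant: writing $V=(C_{i,j})_{0\le i,j\le t-1}$ as a $t\times t$ block matrix of $d\times d$ blocks, each $C_{i,j}$ is a binary circulant $d\times d$ matrix with no $2\times 2$ all-ones submatrix and of weight $w_{j-i \bmod t}$. In particular the weight matrix $W(V)$ is the circulant $t\times t$ matrix whose $(i,j)$ entry is $w_{j-i\bmod t}$ (first row $w_0,w_1,\dots,w_{t-1}$, each subsequent row the cyclic right shift of the previous one).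
   Context: A symmetric $(v,k)$-configuration is a pair $(\mathcal{P},\mathcal{L})$ with $|\mathcal{P}|=|\mathcal{L}|=v$, blocks being subsets of $\mathcal{P}$, each block containing $k$ points, each point in $k$ blocks, any two points in at most one common block; it is cyclic if there is a permutation $\sigma$ of $\mathcal{P}$ mapping blocks to blocks with $\langle\sigma\rangle$ acting regularly on points and on blocks. The incidence matrix has rows indexed by blocks, columns by points, entry $1$ iff the point lies on the block. A square matrix is circulant if each row is obtained from the previous one by a cyclic shift one position to the right; its weight is the number of ones in each row. An $i\times j$ binary matrix is $d$-block circulant if it is partitioned into $d\times d$ blocks each of which is circulant; its weight matrix is the $(i/d)\times(j/d)$ matrix whose entries are the weights of these blocks. *)

theory Defs
  imports Main
begin

definition sym_config :: "'a set \<Rightarrow> 'a set set \<Rightarrow> nat \<Rightarrow> nat \<Rightarrow> bool" where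
  "sym_config P L v k \<longleftrightarrow>
     finite P \<and> card P = v \<and> card L = v \<and>
     (\<forall>l\<in>L. l \<subseteq> P \<and> card l = k) \<and>
     (\<forall>x\<in>P. card {l\<in>L. x \<in> l} = k) \<and>
     (\<forall>x\<in>P. \<forall>y\<in>P. x \<noteq> y \<longrightarrow> card {l\<in>L. x \<in> l \<and> y \<in> l} \<le> 1)"

definition regular_cyclic_action :: "('b \<Rightarrow> 'b) \<Rightarrow> 'b set \<Rightarrow> bool" where
  "regular_cyclic_action act X \<longleftrightarrow>
     (\<forall>x\<in>X. \<forall>y\<in>X. \<exists>n. (act ^^ n) x = y) \<and>
     (\<forall>x\<in>X. \<forall>n. (act ^^ n) x = x \<longrightarrow> (\<forall>z\<in>X. (act ^^ n) z = z))"

definition cyclic_sym_config ::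
  "'a set \<Rightarrow> 'a set set \<Rightarrow> nat \<Rightarrow> nat \<Rightarrow> ('a \<Rightarrow> 'a) \<Rightarrow> bool" where
  "cyclic_sym_config P L v k \<sigma> \<longleftrightarrow>
     sym_config P L v k \<and> bij_betw \<sigma> P P \<and> (\<forall>l\<in>L. \<sigma> ` l \<in> L) \<and>
     regular_cyclic_action \<sigma> P \<and> regular_cyclic_action (image \<sigma>) L"

definition circulant :: "nat \<Rightarrow> (nat \<Rightarrow> nat \<Rightarrow> nat) \<Rightarrow> bool" where
  "circulant d C \<longleftrightarrow> (\<forall>a b. Suc a < d \<and> b < d \<longrightarrow> C (Suc a) ((b + 1) mod d) = C a b)"

definition binary_mat :: "nat \<Rightarrow> nat \<Rightarrow> (nat \<Rightarrow> nat \<Rightarrow> nat) \<Rightarrow> bool" where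
  "binary_mat m n C \<longleftrightarrow> (\<forall>a<m. \<forall>b<n. C a b = 0 \<or> C a b = 1)"

definition no_2x2_ones :: "nat \<Rightarrow> nat \<Rightarrow> (nat \<Rightarrow> nat \<Rightarrow> nat) \<Rightarrow> bool" where
  "no_2x2_ones m n C \<longleftrightarrow>
     \<not> (\<exists>a1<m. \<exists>a2<m. \<exists>b1<n. \<exists>b2<n. a1 \<noteq> a2 \<and> b1 \<noteq> b2 \<and>
          C a1 b1 = 1 \<and> C a1 b2 = 1 \<and> C a2 b1 = 1 \<and> C a2 b2 = 1)"

text \<open>Weight of a circulant d x d matrix: number of ones in (the first, hence every) row.\<close>
definition weight :: "nat \<Rightarrow> (nat \<Rightarrow> nat \<Rightarrow> nat) \<Rightarrow> nat" where
  "weight d C = card {b. b < d \<and> C 0 b = 1}"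

definition block :: "nat \<Rightarrow> (nat \<Rightarrow> nat \<Rightarrow> nat) \<Rightarrow> nat \<Rightarrow> nat \<Rightarrow> (nat \<Rightarrow> nat \<Rightarrow> nat)" where
  "block d M i j = (\<lambda>a b. M (i * d + a) (j * d + b))"

definition block_circulant :: "nat \<Rightarrow> nat \<Rightarrow> nat \<Rightarrow> (nat \<Rightarrow> nat \<Rightarrow> nat) \<Rightarrow> bool" where
  "block_circulant d m n M \<longleftrightarrow> d > 0 \<and> d dvd m \<and> d dvd n \<and>
     (\<forall>i < m div d. \<forall>j < n div d. circulant d (block d M i j))"

definition weight_matrix :: "nat \<Rightarrow> (nat \<Rightarrow> nat \<Rightarrow> nat) \<Rightarrow> (nat \<Rightarrow> nat \<Rightarrow> nat)" where
  "weight_matrix d M = (\<lambda>i j. weight d (block d M i j))"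

end

theory Submission
  imports Defs
begin

lemma funpow_mem: "\<forall>x\<in>X. f x \<in> X \<Longrightarrow> x \<in> X \<Longrightarrow> (f^^n) x \<in> X"
  by (induction n) auto

lemma funpow_inj: assumes "\<forall>x\<in>X. f x \<in> X" "inj_on f X" shows "inj_on (f^^n) X"
proof (induction n)
  case 0 then show ?case by simp
next
  case (Suc n)
  have "inj_on f ((f^^n) ` X)"
    using assms funpow_mem[OF assms(1)] by (meson image_subsetI inj_on_subset)
  then show ?case using Suc comp_inj_on[of "f^^n" X f] by (simp add: comp_def)
qed

lemma orbit_period:
  fixes f :: "'b \<Rightarrow> 'b"
  assumes fin: "finite X" and cX: "card X = v" and maps: "\<forall>x\<in>X. f x \<in> X"
    and inj: "inj_on f X" and x0: "x0 \<in> X" and tr: "\<forall>y\<in>X. \<exists>n. (f^^n) x0 = y"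
  shows "(f^^v) x0 = x0 \<and> inj_on (\<lambda>n. (f^^n) x0) {..<v}"
proof -
  define g where "g = (\<lambda>n. (f^^n) x0)"
  have gX: "g n \<in> X" for n unfolding g_def using funpow_mem[OF maps x0] .
  have injn: "inj_on (f^^n) X" for n using funpow_inj[OF maps inj] .
  have canc: "(f^^q) x0 = x0" if "a < b" "g a = g b" "q = b - a" for a b q
  proof -
    have "(f^^a) ((f^^q) x0) = (f^^a) x0"
    proof -
      have "(f^^a) ((f^^q) x0) = (f^^(a+q)) x0" by (simp add: funpow_add)
      also have "a + q = b" using that by simp
      finally show ?thesis using that unfolding g_def by simp
    qed
    then show ?thesis using injn[of a] x0 funpow_mem[OF maps x0, of q]
      by (meson inj_onD)
  qed
  have ex: "\<exists>p. 0 < p \<and> (f^^p) x0 = x0"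
  proof -
    have "\<not> inj_on g {..v}"
    proof
      assume "inj_on g {..v}"
      then have "card {..v} \<le> card X" using gX fin by (intro card_inj_on_le) auto
      then show False using cX by simp
    qed
    then obtain a b where ab: "a \<noteq> b" "g a = g b" unfolding inj_on_def by blast
    show ?thesis
    proof (cases "a < b")
      case True then show ?thesis using canc[OF True ab(2) refl] by (intro exI[of _ "b-a"]) auto
    next
      case False then have "b < a" using ab by simp
      then show ?thesis using canc[OF \<open>b<a\<close> ab(2)[symmetric] refl] by (intro exI[of _ "a-b"]) auto
    qed
  qed
  define p where "p = (LEAST p. 0 < p \<and> (f^^p) x0 = x0)"
  have pp: "0 < p" "(f^^p) x0 = x0" using LeastI_ex[OF ex] unfolding p_def by auto
  have pmin: "(f^^q) x0 \<noteq> x0" if "0 < q" "q < p" for q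
    using not_less_Least[of q "\<lambda>p. 0 < p \<and> (f^^p) x0 = x0"] that unfolding p_def by auto
  have mult: "(f^^(m*p)) x0 = x0" for m
    by (induction m) (simp_all add: funpow_add pp(2))
  have per: "g n = g (n mod p)" for n
  proof -
    have "g n = g (n mod p + (n div p) * p)" by simp
    also have "\<dots> = (f^^(n mod p)) ((f^^((n div p)*p)) x0)" unfolding g_def by (simp only: funpow_add comp_def)
    also have "\<dots> = g (n mod p)" using mult unfolding g_def by simp
    finally show ?thesis .
  qed
  have ineq: "g a \<noteq> g b" if "a < b" "b < p" for a b
    using canc[OF that(1) _ refl] pmin[of "b-a"] that by auto
  have injp: "inj_on g {..<p}"
    by (rule inj_onI) (metis ineq lessThan_iff linorder_neqE_nat)
  have img: "g ` {..<p} = X"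
  proof
    show "g ` {..<p} \<subseteq> X" using gX by auto
    show "X \<subseteq> g ` {..<p}"
    proof
      fix y assume "y \<in> X"
      then obtain n where "g n = y" using tr unfolding g_def by blast
      then show "y \<in> g ` {..<p}" using per[of n] pp(1) by auto
    qed
  qed
  have "p = v" using card_image[OF injp] img cX by simp
  then show ?thesis using pp injp unfolding g_def by simp
qed

theorem corollary1:
  fixes P :: "'a set" and L :: "'a set set" and v k d t :: nat and \<sigma> :: "'a \<Rightarrow> 'a"
    and P0 :: 'a and l0 :: "'a set"
    and Pt :: "nat \<Rightarrow> 'a" and lt :: "nat \<Rightarrow> 'a set" and Orb :: "nat \<Rightarrow> 'a set"
    and w :: "nat \<Rightarrow> nat" and V :: "nat \<Rightarrow> nat \<Rightarrow> nat"
  assumes cyc: "cyclic_sym_config P L v k \<sigma>"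
    and P0: "P0 \<in> P" and l0: "l0 \<in> L"
    and d: "d > 0" "d dvd v"
    and t_def: "t = v div d"
    and Pt_def: "\<And>u. Pt u = (\<sigma> ^^ u) P0"
    and lt_def: "\<And>u. lt u = ((image \<sigma>) ^^ u) l0"
    and Orb_def: "\<And>i. Orb i = {Pt u | u. u < v \<and> u mod t = i}"
    and w_def: "\<And>u. w u = card (l0 \<inter> Orb u)"
    and V_def: "\<And>r c. V r c = (if Pt (c div d + (c mod d) * t) \<in> lt (r div d + (r mod d) * t)
                                 then 1 else 0)"
  shows "binary_mat v v V \<and> no_2x2_ones v v V \<and> block_circulant d v v V \<and>
         (\<forall>i<t. \<forall>j<t. binary_mat d d (block d V i j) \<and> circulant d (block d V i j) \<and>
             no_2x2_ones d d (block d V i j) \<and>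
             weight d (block d V i j) = w ((j + t - i) mod t)) \<and>
         (\<forall>i<t. \<forall>j<t. weight_matrix d V i j = w ((j + t - i) mod t)) \<and>
         circulant t (weight_matrix d V)"
proof -
  have c1: "sym_config P L v k" and bij: "bij_betw \<sigma> P P" and Lmap: "\<forall>l\<in>L. \<sigma> ` l \<in> L"
    and r1: "regular_cyclic_action \<sigma> P" and r2: "regular_cyclic_action (image \<sigma>) L"
    using cyc unfolding cyclic_sym_config_def by blast+
  have finP: "finite P" and cardP: "card P = v" and cardL: "card L = v"
    and Lsub0: "\<forall>l\<in>L. l \<subseteq> P \<and> card l = k"
    and pair: "\<forall>x\<in>P. \<forall>y\<in>P. x \<noteq> y \<longrightarrow> card {l\<in>L. x \<in> l \<and> y \<in> l} \<le> 1"
    using c1 unfolding sym_config_def by blast+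
  have Lsub: "\<forall>l\<in>L. l \<subseteq> P" using Lsub0 by blast
  have trP: "\<forall>x\<in>P. \<forall>y\<in>P. \<exists>n. (\<sigma>^^n) x = y"
    using r1 unfolding regular_cyclic_action_def by blast
  have trL: "\<forall>x\<in>L. \<forall>y\<in>L. \<exists>n. ((image \<sigma>)^^n) x = y"
    using r2 unfolding regular_cyclic_action_def by blast
  have vpos: "v > 0" using finP P0 cardP card_gt_0_iff by blast
  have finL: "finite L" using cardL vpos card_gt_0_iff by blast
  have injs: "inj_on \<sigma> P" using bij bij_betw_imp_inj_on by blast
  have smap: "\<forall>x\<in>P. \<sigma> x \<in> P" using bij bij_betwE by blast
  have injL: "inj_on (image \<sigma>) L"
    by (rule inj_onI) (meson Lsub inj_on_image_eq_iff injs)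
  have oP: "(\<sigma>^^v) P0 = P0 \<and> inj_on (\<lambda>n. (\<sigma>^^n) P0) {..<v}"
    by (rule orbit_period[OF finP cardP smap injs P0]) (use trP P0 in blast)
  have oL: "((image \<sigma>)^^v) l0 = l0 \<and> inj_on (\<lambda>n. ((image \<sigma>)^^n) l0) {..<v}"
    by (rule orbit_period[OF finL cardL Lmap injL l0]) (use trL l0 in blast)
  have PtE: "Pt = (\<lambda>n. (\<sigma>^^n) P0)" using Pt_def by auto
  have ltE: "lt = (\<lambda>n. ((image \<sigma>)^^n) l0)" using lt_def by auto
  have Pinj: "inj_on Pt {..<v}" using oP PtE by simp
  have Linj: "inj_on lt {..<v}" using oL ltE by simp
  have Pmem: "Pt a \<in> P" for a unfolding Pt_def using funpow_mem[OF smap P0] .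
  have Lmem: "lt b \<in> L" for b unfolding lt_def using funpow_mem[OF Lmap l0] .
  have Pper: "Pt (a + v) = Pt a" for a
    unfolding Pt_def by (simp add: funpow_add oP)
  have Lper: "lt (a + v) = lt a" for a
    unfolding lt_def by (simp add: funpow_add oL)
  have imgpow: "((image \<sigma>)^^c) S = (\<sigma>^^c) ` S" for c S
    by (induction c) (simp_all add: image_comp)
  have injc: "inj_on (\<sigma>^^c) P" for c using funpow_inj[OF smap injs] .
  have E: "Pt a \<in> lt b \<longleftrightarrow> Pt (a + c) \<in> lt (b + c)" for a b c
  proof -
    have "Pt (a + c) = (\<sigma>^^c) (Pt a)" unfolding Pt_def by (metis add.commute comp_apply funpow_add)
    moreover have "lt (b + c) = (\<sigma>^^c) ` lt b"
      unfolding lt_def by (metis add.commute comp_apply funpow_add imgpow)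
    moreover have "lt b \<subseteq> P" using Lmem Lsub by blast
    ultimately show ?thesis using inj_on_image_mem_iff[OF injc[of c]] Pmem by simp
  qed
  have vt: "v = t * d" using d t_def by simp
  have tpos: "t > 0" using vt vpos by (cases t) auto
  have idxlt: "i + a * t < v" if "i < t" "a < d" for i a
  proof -
    have "Suc a * t \<le> d * t" using that by (intro mult_le_mono1) simp
    then show ?thesis using that vt by (simp add: mult.commute)
  qed
  define ix where "ix = (\<lambda>r. r div d + (r mod d) * t)"
  have ixlt: "ix r < v" if "r < v" for r
  proof -
    have "r div d < t" using that vt d by (simp add: div_less_iff_less_mult)
    then show ?thesis unfolding ix_def using idxlt d by simp
  qed
  have ixinj: "r1 = r2" if "r1 < v" "r2 < v" "ix r1 = ix r2" for r1 r2
  proof -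
    have lt1: "r1 div d < t" "r2 div d < t" using that vt d by (simp_all add: div_less_iff_less_mult)
    have "(r1 div d + (r1 mod d) * t) mod t = (r2 div d + (r2 mod d) * t) mod t"
      using that unfolding ix_def by simp
    then have q: "r1 div d = r2 div d" using lt1 by simp
    then have "(r1 mod d) * t = (r2 mod d) * t" using that unfolding ix_def by simp
    then have "r1 mod d = r2 mod d" using tpos by simp
    then show ?thesis using q by (metis div_mult_mod_eq)
  qed
  have Vix: "V r c = (if Pt (ix c) \<in> lt (ix r) then 1 else 0)" for r c
    unfolding ix_def V_def ..
  have Vone: "Pt (ix c) \<in> lt (ix r)" if "V r c = 1" for r c
  proof (rule ccontr)
    assume "Pt (ix c) \<notin> lt (ix r)"
    then have "V r c = 0" unfolding Vix by simp
    then show False using that by simp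
  qed
  have bin: "binary_mat v v V" unfolding binary_mat_def Vix by simp
  have no2: "no_2x2_ones v v V"
  proof -
    { fix a1 a2 b1 b2 assume as: "a1 < v" "a2 < v" "b1 < v" "b2 < v" "a1 \<noteq> a2" "b1 \<noteq> b2"
        "V a1 b1 = 1" "V a1 b2 = 1" "V a2 b1 = 1" "V a2 b2 = 1"
      define x y l1 l2 where "x = Pt (ix b1)" "y = Pt (ix b2)" "l1 = lt (ix a1)" "l2 = lt (ix a2)"
      have "ix b1 \<noteq> ix b2" using ixinj as(3,4,6) by blast
      then have xy: "x \<noteq> y" unfolding x_y_l1_l2_def
        using inj_onD[OF Pinj, of "ix b1" "ix b2"] ixlt[of b1] ixlt[of b2] as(3,4) by auto
      have "ix a1 \<noteq> ix a2" using ixinj as(1,2,5) by blast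
      then have ll: "l1 \<noteq> l2" unfolding x_y_l1_l2_def
        using inj_onD[OF Linj, of "ix a1" "ix a2"] ixlt[of a1] ixlt[of a2] as(1,2) by auto
      have m: "x \<in> l1" "y \<in> l1" "x \<in> l2" "y \<in> l2"
        using as(7-10) Vone unfolding x_y_l1_l2_def by blast+
      have "{l1, l2} \<subseteq> {l\<in>L. x \<in> l \<and> y \<in> l}"
        using m Lmem unfolding x_y_l1_l2_def by blast
      then have "card {l1, l2} \<le> card {l\<in>L. x \<in> l \<and> y \<in> l}"
        using finL by (intro card_mono) auto
      moreover have "card {l\<in>L. x \<in> l \<and> y \<in> l} \<le> 1"
        using pair xy Pmem unfolding x_y_l1_l2_def by blast
      ultimately have False using ll by simp }
    then show ?thesis unfolding no_2x2_ones_def by blast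
  qed
  have blk: "block d V i j a b = (if Pt (j + b * t) \<in> lt (i + a * t) then 1 else 0)"
    if "a < d" "b < d" for i j a b
    unfolding block_def Vix ix_def using that by simp
  have circ: "circulant d (block d V i j)" if "i < t" "j < t" for i j
    unfolding circulant_def
  proof (intro allI impI)
    fix a b assume ab: "Suc a < d \<and> b < d"
    have a: "a < d" and sa: "Suc a < d" and b: "b < d" using ab by auto
    have e1: "i + Suc a * t = (i + a * t) + t" by simp
    have B0: "block d V i j a b = (if Pt (j + b * t) \<in> lt (i + a * t) then 1 else 0)"
      using blk[OF a b] .
    show "block d V i j (Suc a) ((b + 1) mod d) = block d V i j a b"
    proof (cases "b + 1 < d")
      case True
      have m: "(b + 1) mod d = Suc b" using True by simp
      have e2: "j + Suc b * t = (j + b * t) + t" by simp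
      have "block d V i j (Suc a) ((b + 1) mod d)
          = (if Pt ((j + b * t) + t) \<in> lt ((i + a * t) + t) then 1 else 0)"
        unfolding m blk[OF sa True[unfolded Suc_eq_plus1[symmetric]]] e1 e2 ..
      then show ?thesis unfolding B0 using E[of "j + b*t" "i + a*t" t] by simp
    next
      case False
      then have bd: "b + 1 = d" using ab by simp
      have m: "(b + 1) mod d = 0" using bd by simp
      have e2a: "(b + 1) * t = v" using vt bd by (simp only: mult.commute)
      have e2b: "j + b * t + t = j + (b + 1) * t" by simp
      have e2: "j + b * t + t = j + v" using e2a e2b by simp
      have "block d V i j (Suc a) ((b + 1) mod d)
          = (if Pt j \<in> lt ((i + a * t) + t) then 1 else 0)"
        unfolding m blk[OF sa d(1)] e1 mult_0 add_0_right ..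
      also have "\<dots> = (if Pt (j + b * t + t) \<in> lt ((i + a * t) + t) then 1 else 0)"
        unfolding e2 Pper ..
      finally show ?thesis unfolding B0 using E[of "j + b*t" "i + a*t" t] by simp
    qed
  qed
  have wt: "weight d (block d V i j) = w ((j + t - i) mod t)" if ij: "i < t" "j < t" for i j
  proof -
    define e where "e = (j + t - i) mod t"
    have elt: "e < t" unfolding e_def using tpos by simp
    have "weight d (block d V i j) = card {b. b < d \<and> Pt (j + b * t) \<in> lt i}"
      unfolding weight_def using blk d by (intro arg_cong[where f=card]) (auto split: if_splits)
    also have "\<dots> = card {b. b < d \<and> Pt (e + b * t) \<in> l0}"
    proof (cases "i \<le> j")
      case True
      have ee: "e = j - i" unfolding e_def using True ij by (simp add: mod_if)
      have "Pt (j + b * t) \<in> lt i \<longleftrightarrow> Pt (e + b * t) \<in> l0" for b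
        using E[of "e + b*t" 0 i] True ee lt_def[of 0] by simp
      then show ?thesis by simp
    next
      case False
      have ee: "e = j + t - i" unfolding e_def using False ij by simp
      define \<rho> where "\<rho> = (\<lambda>b. (b + d - 1) mod d)"
      define \<rho>' where "\<rho>' = (\<lambda>b. (b + 1) mod d)"
      have key: "Pt (j + b * t) \<in> lt i \<longleftrightarrow> Pt (e + \<rho> b * t) \<in> l0" if "b < d" for b
      proof (cases b)
        case 0
        have r: "\<rho> b = d - 1" unfolding \<rho>_def using 0 d by simp
        have ei: "e + i = j + t" using ee False ij by simp
        have td: "t + (d - 1) * t = t * d" using d(1) by (cases d) simp_all
        have "e + (d - 1) * t + i = (e + i) + (d - 1) * t" by simp
        also have "\<dots> = j + (t + (d - 1) * t)" unfolding ei by simp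
        also have "\<dots> = j + v" unfolding td vt ..
        finally have "e + (d - 1) * t + i = j + v" .
        then show ?thesis using E[of "e + (d-1)*t" 0 i] r 0 Pper[of j] lt_def[of 0] by simp
      next
        case (Suc b')
        have r: "\<rho> b = b'" unfolding \<rho>_def using Suc that by simp
        have "e + b' * t + i = j + b * t" using ee False Suc ij by simp
        then show ?thesis using E[of "e + b'*t" 0 i] r lt_def[of 0] by simp
      qed
      have "bij_betw \<rho> {b. b < d \<and> Pt (e + \<rho> b * t) \<in> l0} {b. b < d \<and> Pt (e + b * t) \<in> l0}"
      proof (rule bij_betw_byWitness[where f' = \<rho>'])
        have i1: "\<rho>' (\<rho> b) = b" if "b < d" for b
          unfolding \<rho>_def \<rho>'_def using that d
          by (cases b) (simp_all add: mod_if)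
        have i2: "\<rho> (\<rho>' b) = b" if "b < d" for b
          unfolding \<rho>_def \<rho>'_def using that d by (cases "b + 1 < d") (simp_all add: mod_if)
        show "\<forall>a\<in>{b. b < d \<and> Pt (e + \<rho> b * t) \<in> l0}. \<rho>' (\<rho> a) = a" using i1 by auto
        show "\<forall>a'\<in>{b. b < d \<and> Pt (e + b * t) \<in> l0}. \<rho> (\<rho>' a') = a'" using i2 by auto
        show "\<rho> ` {b. b < d \<and> Pt (e + \<rho> b * t) \<in> l0} \<subseteq> {b. b < d \<and> Pt (e + b * t) \<in> l0}"
          unfolding \<rho>_def using d by auto
        show "\<rho>' ` {b. b < d \<and> Pt (e + b * t) \<in> l0} \<subseteq> {b. b < d \<and> Pt (e + \<rho> b * t) \<in> l0}"
          using i2 d unfolding \<rho>'_def by auto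
      qed
      then have "card {b. b < d \<and> Pt (e + \<rho> b * t) \<in> l0} = card {b. b < d \<and> Pt (e + b * t) \<in> l0}"
        by (rule bij_betw_same_card)
      moreover have "{b. b < d \<and> Pt (j + b * t) \<in> lt i} = {b. b < d \<and> Pt (e + \<rho> b * t) \<in> l0}"
        using key by auto
      ultimately show ?thesis by simp
    qed
    also have "\<dots> = card (l0 \<inter> Orb e)"
    proof -
      define g where "g = (\<lambda>b. Pt (e + b * t))"
      have ginj: "inj_on g {b. b < d \<and> Pt (e + b * t) \<in> l0}"
      proof (rule inj_onI)
        fix b1 b2 assume "b1 \<in> {b. b < d \<and> Pt (e + b * t) \<in> l0}" "b2 \<in> {b. b < d \<and> Pt (e + b * t) \<in> l0}" "g b1 = g b2"
        then have "e + b1 * t = e + b2 * t" using Pinj idxlt[OF elt] unfolding g_def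
          by (metis (no_types, lifting) inj_on_def lessThan_iff mem_Collect_eq)
        then show "b1 = b2" using tpos by simp
      qed
      have gimg: "g ` {b. b < d \<and> Pt (e + b * t) \<in> l0} = l0 \<inter> Orb e"
      proof
        show "g ` {b. b < d \<and> Pt (e + b * t) \<in> l0} \<subseteq> l0 \<inter> Orb e"
          unfolding g_def Orb_def using idxlt[OF elt] elt by fastforce
        show "l0 \<inter> Orb e \<subseteq> g ` {b. b < d \<and> Pt (e + b * t) \<in> l0}"
        proof
          fix x assume "x \<in> l0 \<inter> Orb e"
          then obtain u where u: "x = Pt u" "u < v" "u mod t = e" "x \<in> l0" unfolding Orb_def by auto
          have ue: "u = e + (u div t) * t" using u(3) mod_div_mult_eq[of u t] by simp
          have "u div t < d" using u(2) vt tpos by (simp add: div_less_iff_less_mult mult.commute)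
          then show "x \<in> g ` {b. b < d \<and> Pt (e + b * t) \<in> l0}"
            unfolding g_def using u ue by (intro image_eqI[of _ _ "u div t"]) auto
        qed
      qed
      show ?thesis using card_image[OF ginj] gimg by simp
    qed
    finally show ?thesis unfolding w_def e_def .
  qed
  have bbin: "binary_mat d d (block d V i j)" for i j
    unfolding binary_mat_def block_def Vix by simp
  have bno2: "no_2x2_ones d d (block d V i j)" if "i < t" "j < t" for i j
  proof -
    have r: "i * d + a < v" if "a < d" for a
    proof -
      have "i * d + a < Suc i * d" using that by simp
      also have "\<dots> \<le> t * d" using \<open>i < t\<close> by (intro mult_le_mono1) simp
      finally show ?thesis using vt by simp
    qed
    have c: "j * d + a < v" if "a < d" for a
    proof -
      have "j * d + a < Suc j * d" using that by simp
      also have "\<dots> \<le> t * d" using \<open>j < t\<close> by (intro mult_le_mono1) simp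
      finally show ?thesis using vt by simp
    qed
    show ?thesis using no2 r c unfolding no_2x2_ones_def block_def
      by (smt (verit) add_left_cancel)
  qed
  have wm: "weight_matrix d V i j = w ((j + t - i) mod t)" if "i < t" "j < t" for i j
    using wt[OF that] unfolding weight_matrix_def .
  have wcirc: "circulant t (weight_matrix d V)"
    unfolding circulant_def
  proof (intro allI impI)
    fix a b assume ab: "Suc a < t \<and> b < t"
    have "((b + 1) mod t + t - Suc a) mod t = (b + t - a) mod t"
    proof (cases "b + 1 < t")
      case True then show ?thesis by simp
    next
      case False
      then have "b + 1 = t" using ab by simp
      then have r0: "(b + t - a) = (t - Suc a) + t" using ab by simp
      have l: "((b + 1) mod t + t - Suc a) mod t = t - Suc a"
        using \<open>b + 1 = t\<close> ab by simp
      have "(b + t - a) mod t = (t - Suc a) mod t" unfolding r0 by simp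
      also have "\<dots> = t - Suc a" using ab by simp
      finally show ?thesis using l by simp
    qed
    then show "weight_matrix d V (Suc a) ((b + 1) mod t) = weight_matrix d V a b"
      using wm ab tpos by simp
  qed
  show ?thesis
    using bin no2 d circ bbin bno2 wt wm wcirc t_def unfolding block_circulant_def by auto
qed

end
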